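(* If $\mathcal C$ is an infinitary clone $\tau$-algebra that has no proper subalgebra, then $(\mathcal C^\downarrow)^\uparrow\cong\mathcal C$.
   Context: $\tau$ is a set of $\omega$-ary operation symbols disjoint from $\{q\}\cup\{e_i:i\in\omega\}$. An infinitary clone $\tau$-algebra is an algebra $\mathcal C$ with constants $e_i^{\mathcal C}$ ($i\in\omega$), a constant $f^{\mathcal C}$ for each $f\in\tau$, and an $\omega$-ary operation $q^{\mathcal C}$, satisfying (N1) $q(e_i,x_0,x_1,\dots)=x_i$; (N2) $q(x,e_0,e_1,\dots)=x$; (N3) $q(q(x,y_0,y_1,\dots),\boldsymbol z)=q(x,q(y_0,\boldsymbol z),q(y_1,\boldsymbol z),\dots)$. $\mathcal C^\downarrow$ is the $\tau$-algebra on $C$ in which $f$ is interpreted as $s\mapsto q^{\mathcal C}(f^{\mathcal C},s_0,s_1,\dots)$. For a $\tau$-algebra $\mathbf A$ (operations $A^\omega\to A$), $\mathbf A^\uparrow$ is the subalgebra of $\mathcal O^{(\omega)}_{\mathbf A}$ generated by its constants, where $\mathcal O^{(\omega)}_{\mathbf A}$ is the infinitary clone $\tau$-algebra of all functions $A^\omega\to A$ with $e_i(s)=s_i$, $q(g_0,g_1,\dots)(s)=g_0(g_1(s),g_2(s),\dots)$, $f\mapsto f^{\mathbf A}$ (equivalently, $\mathbf A^\uparrow$ is the set of term operations of $\mathbf A$). *)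

theory Defs
  imports "HOL-Library.FuncSet"
begin

text \<open>omega-ary operations are modelled as functions on sequences nat => 'a.
  The operation symbols tau are the elements of the type 't.\<close>

record ('c, 't) clone_alg =
  ccarrier :: "'c set"
  proj :: "nat \<Rightarrow> 'c"
  sym :: "'t \<Rightarrow> 'c"
  comp :: "'c \<Rightarrow> (nat \<Rightarrow> 'c) \<Rightarrow> 'c"

record ('a, 't) tau_alg =
  acarrier :: "'a set"
  ops :: "'t \<Rightarrow> (nat \<Rightarrow> 'a) \<Rightarrow> 'a"

definition seqs :: "'a set \<Rightarrow> (nat \<Rightarrow> 'a) set" where
  "seqs A = {s. \<forall>i. s i \<in> A}"

definition infinitary_clone_tau_algebra :: "('c, 't) clone_alg \<Rightarrow> bool" where
  "infinitary_clone_tau_algebra C \<longleftrightarrow>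
     (\<forall>i. proj C i \<in> ccarrier C) \<and>
     (\<forall>f. sym C f \<in> ccarrier C) \<and>
     (\<forall>x\<in>ccarrier C. \<forall>y\<in>seqs (ccarrier C). comp C x y \<in> ccarrier C) \<and>
     (\<forall>i. \<forall>x\<in>seqs (ccarrier C). comp C (proj C i) x = x i) \<and>
     (\<forall>x\<in>ccarrier C. comp C x (proj C) = x) \<and>
     (\<forall>x\<in>ccarrier C. \<forall>y\<in>seqs (ccarrier C). \<forall>z\<in>seqs (ccarrier C).
        comp C (comp C x y) z = comp C x (\<lambda>i. comp C (y i) z))"

definition clone_subalgebra :: "'c set \<Rightarrow> ('c, 't) clone_alg \<Rightarrow> bool" where
  "clone_subalgebra S C \<longleftrightarrow> S \<subseteq> ccarrier C \<and>
     (\<forall>i. proj C i \<in> S) \<and> (\<forall>f. sym C f \<in> S) \<and>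
     (\<forall>x\<in>S. \<forall>y\<in>seqs S. comp C x y \<in> S)"

definition no_proper_subalgebra :: "('c, 't) clone_alg \<Rightarrow> bool" where
  "no_proper_subalgebra C \<longleftrightarrow> (\<forall>S. clone_subalgebra S C \<longrightarrow> S = ccarrier C)"

definition down :: "('c, 't) clone_alg \<Rightarrow> ('c, 't) tau_alg" where
  "down C = \<lparr> acarrier = ccarrier C, ops = (\<lambda>f s. comp C (sym C f) s) \<rparr>"

text \<open>The full infinitary clone tau-algebra O_A of all functions A^omega -> A
  (represented extensionally, i.e. undefined outside A^omega).\<close>
definition full_clone :: "('a, 't) tau_alg \<Rightarrow> ((nat \<Rightarrow> 'a) \<Rightarrow> 'a, 't) clone_alg" where
  "full_clone A = \<lparr> ccarrier = (seqs (acarrier A) \<rightarrow>\<^sub>E acarrier A),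
     proj = (\<lambda>i. restrict (\<lambda>s. s i) (seqs (acarrier A))),
     sym = (\<lambda>f. restrict (ops A f) (seqs (acarrier A))),
     comp = (\<lambda>g0 g. restrict (\<lambda>s. g0 (\<lambda>i. g i s)) (seqs (acarrier A))) \<rparr>"

inductive_set generated :: "('c, 't) clone_alg \<Rightarrow> 'c set" for C where
  gen_proj: "proj C i \<in> generated C"
| gen_sym: "sym C f \<in> generated C"
| gen_comp: "x \<in> generated C \<Longrightarrow> (\<And>i. y i \<in> generated C) \<Longrightarrow> comp C x y \<in> generated C"

definition up :: "('a, 't) tau_alg \<Rightarrow> ((nat \<Rightarrow> 'a) \<Rightarrow> 'a, 't) clone_alg" where
  "up A = (full_clone A) \<lparr> ccarrier := generated (full_clone A) \<rparr>"

definition clone_iso :: "('c, 't) clone_alg \<Rightarrow> ('d, 't) clone_alg \<Rightarrow> ('c \<Rightarrow> 'd) \<Rightarrow> bool" where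
  "clone_iso C D h \<longleftrightarrow> bij_betw h (ccarrier C) (ccarrier D) \<and>
     (\<forall>i. h (proj C i) = proj D i) \<and>
     (\<forall>f. h (sym C f) = sym D f) \<and>
     (\<forall>x\<in>ccarrier C. \<forall>y\<in>seqs (ccarrier C). h (comp C x y) = comp D (h x) (\<lambda>i. h (y i)))"

definition clone_isomorphic :: "('c, 't) clone_alg \<Rightarrow> ('d, 't) clone_alg \<Rightarrow> bool" where
  "clone_isomorphic C D \<longleftrightarrow> (\<exists>h. clone_iso C D h)"

end

theory Submission
  imports Defs
begin

lemma up_simps:
  "ccarrier (up (down C)) = generated (full_clone (down C))"
  "proj (up (down C)) = proj (full_clone (down C))"
  "sym (up (down C)) = sym (full_clone (down C))"
  "comp (up (down C)) = comp (full_clone (down C))"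
  by (simp_all add: up_def)

lemma fc_simps:
  "proj (full_clone (down C)) i = restrict (\<lambda>s. s i) (seqs (ccarrier C))"
  "sym (full_clone (down C)) f = restrict (\<lambda>s. comp C (sym C f) s) (seqs (ccarrier C))"
  "comp (full_clone (down C)) g0 g = restrict (\<lambda>s. g0 (\<lambda>i. g i s)) (seqs (ccarrier C))"
  by (simp_all add: full_clone_def down_def)

lemma key:
  assumes A: "infinitary_clone_tau_algebra C"
    and g: "g \<in> generated (full_clone (down C))"
  shows "g (proj C) \<in> ccarrier C \<and> g = restrict (\<lambda>s. comp C (g (proj C)) s) (seqs (ccarrier C))"
  using g
proof induction
  case (gen_proj i)
  have pS: "proj C \<in> seqs (ccarrier C)" using A by (simp add: infinitary_clone_tau_algebra_def seqs_def)
  have e: "proj (full_clone (down C)) i (proj C) = proj C i" using pS by (simp add: fc_simps)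
  have c: "proj C i \<in> ccarrier C" using A by (simp add: infinitary_clone_tau_algebra_def)
  have N1: "\<And>s. s \<in> seqs (ccarrier C) \<Longrightarrow> comp C (proj C i) s = s i"
    using A unfolding infinitary_clone_tau_algebra_def by blast
  have "restrict (\<lambda>s. s i) (seqs (ccarrier C)) = restrict (\<lambda>s. comp C (proj C i) s) (seqs (ccarrier C))"
    by (rule restrict_ext) (simp add: N1)
  then show ?case using e c by (simp only: fc_simps)
next
  case (gen_sym f)
  have pS: "proj C \<in> seqs (ccarrier C)" using A by (simp add: infinitary_clone_tau_algebra_def seqs_def)
  have c: "sym C f \<in> ccarrier C" using A by (simp add: infinitary_clone_tau_algebra_def)
  have N2: "comp C (sym C f) (proj C) = sym C f"
    using A c unfolding infinitary_clone_tau_algebra_def by blast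
  have e: "sym (full_clone (down C)) f (proj C) = sym C f" using pS N2 by (simp add: fc_simps)
  show ?case using e c by (simp only: fc_simps)
next
  case (gen_comp x y)
  have pS: "proj C \<in> seqs (ccarrier C)" using A by (simp add: infinitary_clone_tau_algebra_def seqs_def)
  define x0 where "x0 = x (proj C)"
  define y0 where "y0 = (\<lambda>i. y i (proj C))"
  have x0: "x0 \<in> ccarrier C" using gen_comp.IH(1) x0_def by blast
  have y0: "y0 \<in> seqs (ccarrier C)"
    unfolding seqs_def y0_def using gen_comp.IH(2) by blast
  have xe: "\<And>s. s \<in> seqs (ccarrier C) \<Longrightarrow> x s = comp C x0 s"
  proof -
    fix s assume s: "s \<in> seqs (ccarrier C)"
    have "x = restrict (\<lambda>s. comp C x0 s) (seqs (ccarrier C))" using gen_comp.IH(1) x0_def by blast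
    then have "x s = restrict (\<lambda>s. comp C x0 s) (seqs (ccarrier C)) s" by (rule arg_cong)
    then show "x s = comp C x0 s" using s by simp
  qed
  have ye: "\<And>i s. s \<in> seqs (ccarrier C) \<Longrightarrow> y i s = comp C (y0 i) s"
  proof -
    fix i s assume s: "s \<in> seqs (ccarrier C)"
    have "y i = restrict (\<lambda>s. comp C (y0 i) s) (seqs (ccarrier C))" using gen_comp.IH(2) y0_def by blast
    then have "y i s = restrict (\<lambda>s. comp C (y0 i) s) (seqs (ccarrier C)) s" by (rule arg_cong)
    then show "y i s = comp C (y0 i) s" using s by simp
  qed
  have cl: "\<And>a b. a \<in> ccarrier C \<Longrightarrow> b \<in> seqs (ccarrier C) \<Longrightarrow> comp C a b \<in> ccarrier C"
    using A unfolding infinitary_clone_tau_algebra_def by blast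
  have N3: "\<And>a b c. a \<in> ccarrier C \<Longrightarrow> b \<in> seqs (ccarrier C) \<Longrightarrow> c \<in> seqs (ccarrier C) \<Longrightarrow>
     comp C (comp C a b) c = comp C a (\<lambda>i. comp C (b i) c)"
    using A unfolding infinitary_clone_tau_algebra_def by blast
  have yS: "\<And>s. s \<in> seqs (ccarrier C) \<Longrightarrow> (\<lambda>i. y i s) \<in> seqs (ccarrier C)"
  proof -
    fix s assume s: "s \<in> seqs (ccarrier C)"
    have "\<And>i. y0 i \<in> ccarrier C" using y0 unfolding seqs_def by blast
    then have "\<And>i. y i s \<in> ccarrier C" using ye[OF s] cl s by metis
    then show "(\<lambda>i. y i s) \<in> seqs (ccarrier C)" unfolding seqs_def by blast
  qed
  have gp: "comp (full_clone (down C)) x y (proj C) = comp C x0 y0"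
  proof -
    have "comp (full_clone (down C)) x y (proj C) = x y0"
      using pS by (simp add: fc_simps y0_def)
    also have "\<dots> = comp C x0 y0" by (rule xe[OF y0])
    finally show ?thesis .
  qed
  have gpC: "comp C x0 y0 \<in> ccarrier C" using cl x0 y0 by blast
  have eq: "\<And>s. s \<in> seqs (ccarrier C) \<Longrightarrow> x (\<lambda>i. y i s) = comp C (comp C x0 y0) s"
  proof -
    fix s assume s: "s \<in> seqs (ccarrier C)"
    have "x (\<lambda>i. y i s) = comp C x0 (\<lambda>i. y i s)" using xe yS s by blast
    also have "\<dots> = comp C x0 (\<lambda>i. comp C (y0 i) s)" using ye s by simp
    also have "\<dots> = comp C (comp C x0 y0) s"
      using N3 x0 y0 s by simp
    finally show "x (\<lambda>i. y i s) = comp C (comp C x0 y0) s" .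
  qed
  have "restrict (\<lambda>s. x (\<lambda>i. y i s)) (seqs (ccarrier C)) = restrict (\<lambda>s. comp C (comp C x0 y0) s) (seqs (ccarrier C))"
    by (rule restrict_ext) (simp add: eq)
  then show ?case using gp gpC by (simp only: fc_simps)
qed

theorem proposition4p7:
  fixes C :: "('c, 't) clone_alg"
  assumes "infinitary_clone_tau_algebra C"
    and "no_proper_subalgebra C"
  shows "clone_isomorphic (up (down C)) C"
proof -
  note A = assms(1)
  let ?G = "generated (full_clone (down C))"
  define h where "h = (\<lambda>g::(nat \<Rightarrow> 'c) \<Rightarrow> 'c. g (proj C))"
  have pS: "proj C \<in> seqs (ccarrier C)" using A by (simp add: infinitary_clone_tau_algebra_def seqs_def)
  have hp: "\<And>i. h (proj (full_clone (down C)) i) = proj C i"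
    using pS by (simp add: h_def fc_simps)
  have hs: "\<And>f. h (sym (full_clone (down C)) f) = sym C f"
    using pS A by (simp add: h_def fc_simps infinitary_clone_tau_algebra_def)
  have hc: "\<And>x (y::nat \<Rightarrow> _). x \<in> ?G \<Longrightarrow> (\<forall>i. y i \<in> ?G) \<Longrightarrow>
      h (comp (full_clone (down C)) x y) = comp C (h x) (\<lambda>i. h (y i))"
  proof -
    fix x and y :: "nat \<Rightarrow> _" assume x: "x \<in> ?G" and y: "\<forall>i. y i \<in> ?G"
    have "(\<lambda>i. y i (proj C)) \<in> seqs (ccarrier C)" using key[OF A] y by (auto simp: seqs_def)
    then have "x (\<lambda>i. y i (proj C)) = comp C (x (proj C)) (\<lambda>i. y i (proj C))"
      using key[OF A x] by (metis restrict_apply')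
    then show "h (comp (full_clone (down C)) x y) = comp C (h x) (\<lambda>i. h (y i))"
      using pS by (simp add: h_def fc_simps)
  qed
  have inj: "inj_on h ?G"
  proof
    fix x y assume x: "x \<in> ?G" and y: "y \<in> ?G" and e: "h x = h y"
    show "x = y" using key[OF A x] key[OF A y] e unfolding h_def by metis
  qed
  have sub: "clone_subalgebra (h ` ?G) C"
    unfolding clone_subalgebra_def
  proof (intro conjI ballI allI)
    show "h ` ?G \<subseteq> ccarrier C" using key[OF A] by (auto simp: h_def)
    fix i show "proj C i \<in> h ` ?G" using hp generated.gen_proj by (metis image_eqI)
  next
    fix f show "sym C f \<in> h ` ?G" using hs generated.gen_sym by (metis image_eqI)
  next
    fix x y assume x: "x \<in> h ` ?G" and y: "y \<in> seqs (h ` ?G)"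
    obtain x' where x': "x' \<in> ?G" "x = h x'" using x by blast
    have "\<forall>i. \<exists>g. g \<in> ?G \<and> y i = h g" using y by (auto simp: seqs_def)
    then obtain y' where y': "\<And>i. y' i \<in> ?G" "\<And>i. y i = h (y' i)" by metis
    have "comp C x y = h (comp (full_clone (down C)) x' y')"
    proof -
      have "y = (\<lambda>i. h (y' i))" using y'(2) by auto
      then show ?thesis using hc[OF x'(1)] y'(1) x'(2) by simp
    qed
    moreover have "comp (full_clone (down C)) x' y' \<in> ?G"
      using x' y' by (simp add: generated.gen_comp)
    ultimately show "comp C x y \<in> h ` ?G" by blast
  qed
  have surj: "h ` ?G = ccarrier C" using assms(2) sub by (simp add: no_proper_subalgebra_def)
  have "clone_iso (up (down C)) C h"
    unfolding clone_iso_def up_simps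
    using inj surj hp hs hc by (auto simp: bij_betw_def seqs_def)
  then show ?thesis unfolding clone_isomorphic_def by blast
qed

end
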